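(* Let $m,n,T$ be positive integers with $T\ge 2$, let $\mathbf{G}\in\mathbb{F}_2^{n\times m}$ have $n$ distinct nonzero rows $\mathbf{g}_1,\dots,\mathbf{g}_n$ spanning a subspace of dimension $T$, and let $\mathbf{A}\in\mathbb{F}_2^{T\times m}$ be a matrix whose rows form a basis of the row space of $\mathbf{G}$. If $\lceil T/2\rceil\le k<T$, then there exists a matrix $\mathbf{P}\in\mathbb{F}_2^{T_k\times T}$ with $T_k\le\min\{n,\,T+1\}$ such that every $\mathbf{g}_i$ is the sum over $\mathbb{F}_2$ of at most $k$ rows of $\mathbf{P}\mathbf{A}$.
   Context: Such a $\mathbf{P}$ is called a $k$-limited-access scheme with $T_k$ transmissions for the coding matrix $\mathbf{A}$. *)

theory Defs
  imports "Jordan_Normal_Form.DL_Rank" "HOL-Library.Z2"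
begin

definition row_space_dim :: "nat \<Rightarrow> bit mat \<Rightarrow> nat" where
  "row_space_dim m G = vec_space.rank m (transpose_mat G)"

end

theory Submission imports Defs begin

lemma rowPA: assumes P: "P \<in> carrier_mat Tk T" and A: "A \<in> carrier_mat T m"
  shows "row (P * A) r \<in> carrier_vec m"
proof -
  have "dim_col (P * A) = m" using A by simp
  then show ?thesis using row_carrier[of "P*A" r] by simp
qed

lemma fsum_entry:
  assumes P: "P \<in> carrier_mat Tk T" and A: "A \<in> carrier_mat T m" and S: "S \<subseteq> {..<Tk}"
    and j: "j < m"
  shows "finsum_vec TYPE('a::comm_ring_1) m (\<lambda>r. row (P * A) r) S $ j
     = (\<Sum>r\<in>S. \<Sum>l<T. P $$ (r,l) * A $$ (l,j))"
proof -
  have fin: "finite S" using S finite_subset by blast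
  have "finsum_vec TYPE('a) m (\<lambda>r. row (P * A) r) S $ j = (\<Sum>r\<in>S. row (P*A) r $ j)"
    by (rule index_finsum_vec[OF fin j], use rowPA[OF P A] in blast)
  also have "\<dots> = (\<Sum>r\<in>S. \<Sum>l<T. P $$ (r,l) * A $$ (l,j))"
  proof (rule sum.cong[OF refl])
    fix r assume "r \<in> S"
    hence r: "r < Tk" using S by auto
    have "row (P*A) r $ j = (P * A) $$ (r,j)" using r j P A by simp
    also have "\<dots> = row P r \<bullet> col A j" using r j P A by simp
    also have "\<dots> = (\<Sum>l<T. P $$ (r,l) * A $$ (l,j))"
      using r j P A by (simp add: scalar_prod_def lessThan_atLeast0)
    finally show "row (P*A) r $ j = (\<Sum>l<T. P $$ (r,l) * A $$ (l,j))" .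
  qed
  finally show ?thesis .
qed

lemma fsum_dim:
  assumes P: "P \<in> carrier_mat Tk T" and A: "A \<in> carrier_mat T m"
  shows "finsum_vec TYPE('a::comm_ring_1) m (\<lambda>r. row (P * A) r) S \<in> carrier_vec m"
  by (rule finsum_vec_closed, use rowPA[OF P A] in blast)

lemma coeffs:
  assumes G: "G \<in> carrier_mat n m" and A: "A \<in> carrier_mat T m"
    and eq: "vec_space.row_space m A = vec_space.row_space m G" and i: "i < n"
  shows "\<exists>y\<in>carrier_vec T. \<forall>j<m. row G i $ j = (\<Sum>l<T. y $ l * A $$ (l,j :: nat) :: 'a::field)"
proof -
  have "G\<^sup>T *\<^sub>v unit_vec n i = row G i"
    by (rule eq_vecI, insert G i, auto simp: scalar_prod_def sum.remove[of "{0..<n}" i] intro!: sum.neutral)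
  hence "row G i \<in> vec_space.row_space m G"
    unfolding vec_space.row_space_eq[OF G] using G i by force
  hence "row G i \<in> vec_space.row_space m A" using eq by simp
  then obtain y where y: "y \<in> carrier_vec T" "A\<^sup>T *\<^sub>v y = row G i"
    unfolding vec_space.row_space_eq[OF A] using A by auto
  show ?thesis
  proof (intro bexI[OF _ y(1)] allI impI)
    fix j assume j: "j < m"
    have "row G i $ j = (A\<^sup>T *\<^sub>v y) $ j" by (subst y(2), rule refl)
    also have "\<dots> = (\<Sum>l<T. y $ l * A $$ (l,j))"
      using A j y(1) by (auto simp: scalar_prod_def lessThan_atLeast0 mult.commute intro!: sum.cong)
    finally show "row G i $ j = (\<Sum>l<T. y $ l * A $$ (l,j))" .
  qed
qed

lemma bit01: "(x::bit) = 0 \<or> x = 1" by auto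
lemma bitxx: "(x::bit) + x = 0" using bit01[of x] by auto
lemma bitcanc: "(b::bit) + (a + b) = a" using bit01[of a] bit01[of b] by auto
lemma bitmul: "(x::bit) * y = (if x = 1 then y else 0)" using bit01[of x] by auto

theorem theorem1:
  fixes m n T k :: nat and G A :: "bit mat"
  assumes "0 < m" and "0 < n" and "2 \<le> T"
    and G: "G \<in> carrier_mat n m"
    and "distinct (rows G)"
    and "\<forall>i<n. row G i \<noteq> 0\<^sub>v m"
    and "row_space_dim m G = T"
    and A: "A \<in> carrier_mat T m"
    and "distinct (rows A)"
    and "\<not> module.lin_dep class_ring (module_vec TYPE(bit) m) (set (rows A))"
    and "vec_space.row_space m A = vec_space.row_space m G"
    and "(T + 1) div 2 \<le> k" and "k < T"
  shows "\<exists>Tk P. P \<in> carrier_mat Tk T \<and> Tk \<le> min n (T + 1) \<and>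
           (\<forall>i<n. \<exists>S. S \<subseteq> {..<Tk} \<and> card S \<le> k \<and>
              row G i = finsum_vec TYPE(bit) m (\<lambda>j. row (P * A) j) S)"
proof -
  have "\<forall>i. \<exists>y. i < n \<longrightarrow> y \<in> carrier_vec T \<and> (\<forall>j<m. row G i $ j = (\<Sum>l<T. y $ l * A $$ (l,j)))"
  proof
    fix i show "\<exists>y. i < n \<longrightarrow> y \<in> carrier_vec T \<and> (\<forall>j<m. row G i $ j = (\<Sum>l<T. y $ l * A $$ (l,j)))"
      using coeffs[OF G A assms(11), of i] by (cases "i < n") auto
  qed
  from choice[OF this] obtain c where c0: "\<forall>i. i < n \<longrightarrow> c i \<in> carrier_vec T \<and> (\<forall>j<m. row G i $ j = (\<Sum>l<T. c i $ l * A $$ (l,j)))"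
    by blast
  have c: "\<And>i. i < n \<Longrightarrow> c i \<in> carrier_vec T"
    "\<And>i j. i < n \<Longrightarrow> j < m \<Longrightarrow> row G i $ j = (\<Sum>l<T. c i $ l * A $$ (l,j))"
    using c0 by auto
  have k1: "1 \<le> k" "T \<le> 2 * k" using assms(3,12) by auto
  show ?thesis
  proof (cases "n \<le> T + 1")
    case True
    define P where "P = mat n T (\<lambda>(i,l). c i $ l)"
    have P: "P \<in> carrier_mat n T" unfolding P_def by auto
    show ?thesis
    proof (intro exI conjI allI impI)
      fix i assume i: "i < n"
      show "{i} \<subseteq> {..<n}" "card {i} \<le> k" using i k1 by auto
      show "row G i = finsum_vec TYPE(bit) m (\<lambda>j. row (P * A) j) {i}"
      proof (rule eq_vecI)
        fix j assume "j < dim_vec (finsum_vec TYPE(bit) m (\<lambda>j. row (P * A) j) {i})"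
        hence j: "j < m" using fsum_dim[OF P A, of "{i}"] i by auto
        show "row G i $ j = finsum_vec TYPE(bit) m (\<lambda>j. row (P * A) j) {i} $ j"
        proof -
          have sub: "{i} \<subseteq> {..<n}" using i by auto
          have "(\<Sum>l<T. P $$ (i,l) * A $$ (l,j)) = (\<Sum>l<T. c i $ l * A $$ (l,j))"
            by (rule sum.cong, auto simp: P_def i)
          then show ?thesis
            unfolding fsum_entry[OF P A sub j] c(2)[OF i j] by simp
        qed
      next
        show "dim_vec (row G i) = dim_vec (finsum_vec TYPE(bit) m (\<lambda>j. row (P * A) j) {i})"
          using fsum_dim[OF P A, of "{i}"] i G by auto
      qed
    qed (use P True in auto)
  next
    case False
    define P :: "bit mat" where "P = mat (T+1) T (\<lambda>(r,l). if r < T then (if r = l then 1 else 0) else 1)"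
    have P: "P \<in> carrier_mat (T+1) T" unfolding P_def by auto
    have fr: "(\<Sum>l<T. P $$ (r,l) * A $$ (l,j)) = A $$ (r,j)" if "r < T" for r j
    proof -
      have "(\<Sum>l<T. P $$ (r,l) * A $$ (l,j)) = (\<Sum>l<T. if l = r then A $$ (l,j) else 0)"
        using that by (intro sum.cong) (simp_all add: P_def less_SucI)
      then show ?thesis using that by simp
    qed
    have fT: "(\<Sum>l<T. P $$ (T,l) * A $$ (l,j)) = (\<Sum>l<T. A $$ (l,j))" for j
      by (intro sum.cong) (simp_all add: P_def)
    show ?thesis
    proof (rule exI[of _ "T+1"], rule exI[of _ P], intro conjI allI impI)
      fix i assume i: "i < n"
      define S0 where "S0 = {l. l < T \<and> c i $ l = 1}"
      have S0: "S0 \<subseteq> {..<T}" "finite S0" unfolding S0_def by auto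
      have gS0: "row G i $ j = (\<Sum>l\<in>S0. A $$ (l,j))" if j: "j < m" for j
      proof -
        have "row G i $ j = (\<Sum>l<T. if c i $ l = 1 then A $$ (l,j) else 0)"
          unfolding c(2)[OF i j] by (rule sum.cong[OF refl], rule bitmul)
        also have "\<dots> = (\<Sum>l\<in>S0. A $$ (l,j))"
        proof -
          have "S0 = {l\<in>{..<T}. c i $ l = 1}" unfolding S0_def by auto
          then show ?thesis by (simp only: sum.inter_filter[OF finite_lessThan])
        qed
        finally show ?thesis .
      qed
      have dimG: "dim_vec (row G i) = m" using G by auto
      show "\<exists>S. S \<subseteq> {..<T+1} \<and> card S \<le> k \<and>
              row G i = finsum_vec TYPE(bit) m (\<lambda>j. row (P * A) j) S"
      proof (cases "card S0 \<le> k")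
        case True
        have sub: "S0 \<subseteq> {..<T+1}" using S0 by auto
        show ?thesis
        proof (intro exI conjI)
          show "row G i = finsum_vec TYPE(bit) m (\<lambda>j. row (P * A) j) S0"
          proof (rule eq_vecI)
            fix j assume "j < dim_vec (finsum_vec TYPE(bit) m (\<lambda>j. row (P * A) j) S0)"
            hence j: "j < m" using fsum_dim[OF P A, of S0] by auto
            show "row G i $ j = finsum_vec TYPE(bit) m (\<lambda>j. row (P * A) j) S0 $ j"
              unfolding fsum_entry[OF P A sub j] gS0[OF j]
              by (rule sum.cong, simp, rule fr[symmetric], use S0 in auto)
          qed (use fsum_dim[OF P A, of S0] dimG in auto)
        qed (use sub True in auto)
      next
        case False
        define S where "S = ({..<T} - S0) \<union> {T}"
        have sub: "S \<subseteq> {..<T+1}" unfolding S_def by auto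
        have cardS: "card S = T - card S0 + 1"
          unfolding S_def using S0 by (simp add: card_Diff_subset)
        show ?thesis
        proof (intro exI conjI)
          show "row G i = finsum_vec TYPE(bit) m (\<lambda>j. row (P * A) j) S"
          proof (rule eq_vecI)
            fix j assume "j < dim_vec (finsum_vec TYPE(bit) m (\<lambda>j. row (P * A) j) S)"
            hence j: "j < m" using fsum_dim[OF P A, of S] by auto
            have split: "(\<Sum>l<T. A $$ (l,j)) = (\<Sum>l\<in>S0. A $$ (l,j)) + (\<Sum>l\<in>{..<T} - S0. A $$ (l,j))"
              by (subst sum.subset_diff[OF S0(1) finite_lessThan], rule add.commute)
            have "(\<Sum>r\<in>S. \<Sum>l<T. P $$ (r,l) * A $$ (l,j)) =
                 (\<Sum>r\<in>{..<T} - S0. \<Sum>l<T. P $$ (r,l) * A $$ (l,j)) + (\<Sum>l<T. P $$ (T,l) * A $$ (l,j))"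
            proof -
              have "(\<Sum>r\<in>S. \<Sum>l<T. P $$ (r,l) * A $$ (l,j)) =
                 (\<Sum>r\<in>{..<T} - S0. \<Sum>l<T. P $$ (r,l) * A $$ (l,j)) + (\<Sum>r\<in>{T}. \<Sum>l<T. P $$ (r,l) * A $$ (l,j))"
                unfolding S_def by (rule sum.union_disjoint) auto
              then show ?thesis by (simp only: sum.empty sum.insert_remove empty_Diff finite.emptyI add_0_right)
            qed
            also have "\<dots> = (\<Sum>r\<in>{..<T} - S0. A $$ (r,j)) + (\<Sum>l<T. A $$ (l,j))"
            proof -
              have "(\<Sum>r\<in>{..<T} - S0. \<Sum>l<T. P $$ (r,l) * A $$ (l,j)) = (\<Sum>r\<in>{..<T} - S0. A $$ (r,j))"
                by (rule sum.cong[OF refl], rule fr, blast)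
              then show ?thesis unfolding fT by (rule arg_cong[where f="\<lambda>x. x + _"])
            qed
            also have "\<dots> = (\<Sum>l\<in>S0. A $$ (l,j))"
              unfolding split by (rule bitcanc)
            finally show "row G i $ j = finsum_vec TYPE(bit) m (\<lambda>j. row (P * A) j) S $ j"
              unfolding fsum_entry[OF P A sub j] gS0[OF j] by (rule sym)
          qed (use fsum_dim[OF P A, of S] dimG in auto)
        qed (use sub cardS False k1 in auto)
      qed
    qed (use P False in auto)
  qed
qed

end
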